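(* Let $(X,T)$ be a minimal topological dynamical system. Then $(X,T)$ is mean equicontinuous if and only if it is equicontinuous in the mean.
   Context: A t.d.s. $(X,T)$ consists of a compact metric space $(X,d)$ and a continuous map $T\colon X\to X$; it is minimal if every orbit $\{x,Tx,T^2x,\dots\}$ is dense in $X$. Let $\bar d_n(x,y)=\frac1n\sum_{i=0}^{n-1}d(T^ix,T^iy)$. $(X,T)$ is mean equicontinuous if for every $\varepsilon>0$ there is $\delta>0$ such that $d(x,y)<\delta$ implies $\limsup_{n\to\infty}\bar d_n(x,y)<\varepsilon$. $(X,T)$ is equicontinuous in the mean if for every $\varepsilon>0$ there is $\delta>0$ such that $d(x,y)<\delta$ implies $\bar d_n(x,y)<\varepsilon$ for every $n\in\mathbb{N}$. *)

theory Defs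
  imports "HOL-Analysis.Analysis"
begin

definition tds :: "'a::metric_space set \<Rightarrow> ('a \<Rightarrow> 'a) \<Rightarrow> bool" where
  "tds X T \<longleftrightarrow> compact X \<and> continuous_on X T \<and> T ` X \<subseteq> X"

definition minimal_tds :: "'a::metric_space set \<Rightarrow> ('a \<Rightarrow> 'a) \<Rightarrow> bool" where
  "minimal_tds X T \<longleftrightarrow> tds X T \<and>
     (\<forall>x\<in>X. closure (range (\<lambda>n. (T ^^ n) x)) = X)"

definition dbar :: "('a::metric_space \<Rightarrow> 'a) \<Rightarrow> nat \<Rightarrow> 'a \<Rightarrow> 'a \<Rightarrow> real" where
  "dbar T n x y = (\<Sum>i<n. dist ((T ^^ i) x) ((T ^^ i) y)) / real n"

definition mean_equicontinuous :: "'a::metric_space set \<Rightarrow> ('a \<Rightarrow> 'a) \<Rightarrow> bool" where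
  "mean_equicontinuous X T \<longleftrightarrow>
     (\<forall>\<epsilon>>0. \<exists>\<delta>>0. \<forall>x\<in>X. \<forall>y\<in>X. dist x y < \<delta> \<longrightarrow>
        limsup (\<lambda>n. ereal (dbar T n x y)) < ereal \<epsilon>)"

definition equicontinuous_in_mean :: "'a::metric_space set \<Rightarrow> ('a \<Rightarrow> 'a) \<Rightarrow> bool" where
  "equicontinuous_in_mean X T \<longleftrightarrow>
     (\<forall>\<epsilon>>0. \<exists>\<delta>>0. \<forall>x\<in>X. \<forall>y\<in>X. dist x y < \<delta> \<longrightarrow>
        (\<forall>n\<ge>1. dbar T n x y < \<epsilon>))"

end

theory Submission
  imports Defs
begin


lemma iter_in: "T ` X \<subseteq> X \<Longrightarrow> x \<in> X \<Longrightarrow> (T ^^ i) x \<in> X"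
  by (induction i) auto

lemma iter_cont: "continuous_on X T \<Longrightarrow> T ` X \<subseteq> X \<Longrightarrow> continuous_on X (T ^^ i)"
proof (induction i)
  case 0 then show ?case by (simp add: continuous_on_id)
next
  case (Suc i)
  have "continuous_on X (T \<circ> (T ^^ i))"
    by (rule continuous_on_compose[OF Suc.IH[OF Suc.prems]]) (use Suc.prems iter_in[of T X] in \<open>meson continuous_on_subset image_subset_iff\<close>)
  then show ?case by simp
qed

lemma UC:
  assumes "tds X T" "\<eta> > 0"
  shows "\<exists>\<rho>>0. \<forall>x\<in>X. \<forall>y\<in>X. dist x y < \<rho> \<longrightarrow> (\<forall>i<N. dist ((T ^^ i) x) ((T ^^ i) y) < \<eta>)"
proof (induction N)
  case 0 then show ?case by (intro exI[of _ 1]) auto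
next
  case (Suc N)
  then obtain \<rho> where r: "\<rho> > 0" "\<forall>x\<in>X. \<forall>y\<in>X. dist x y < \<rho> \<longrightarrow> (\<forall>i<N. dist ((T ^^ i) x) ((T ^^ i) y) < \<eta>)" by blast
  have "uniformly_continuous_on X (T ^^ N)"
    using assms(1) iter_cont compact_uniformly_continuous unfolding tds_def by blast
  then obtain r2 where r2: "r2 > 0" "\<forall>x\<in>X. \<forall>y\<in>X. dist y x < r2 \<longrightarrow> dist ((T ^^ N) y) ((T ^^ N) x) < \<eta>"
    unfolding uniformly_continuous_on_def using assms(2) by blast
  show ?case
    apply (rule exI[of _ "min \<rho> r2"])
    using r r2 by (auto simp: less_Suc_eq dist_commute)
qed

lemma avg_lt:
  fixes f :: "nat \<Rightarrow> real"
  assumes "n \<ge> 1" "\<And>i. i < n \<Longrightarrow> f i < c"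
  shows "(\<Sum>i<n. f i) / real n < c"
proof -
  have "(\<Sum>i<n. f i) < (\<Sum>i<n. c)"
    by (rule sum_strict_mono) (use assms in \<open>auto simp: lessThan_empty_iff\<close>)
  then show ?thesis using assms(1) by (simp add: divide_less_eq mult.commute)
qed

lemma dbar_nonneg: "0 \<le> dbar T n x y"
  unfolding dbar_def by (simp add: sum_nonneg)

lemma dbar_le:
  assumes "T ` X \<subseteq> X" "x \<in> X" "y \<in> X" "\<forall>x\<in>X. \<forall>y\<in>X. dist x y \<le> B" "B \<ge> 0"
  shows "dbar T n x y \<le> B"
proof (cases "n = 0")
  case True then show ?thesis using assms by (simp add: dbar_def)
next
  case False
  have "(\<Sum>i<n. dist ((T ^^ i) x) ((T ^^ i) y)) \<le> (\<Sum>i<n. B)"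
    by (rule sum_mono) (use assms iter_in[of T X] in simp)
  then show ?thesis using False unfolding dbar_def by (simp add: divide_le_eq mult.commute)
qed

lemma dbar_tri: "dbar T n x z \<le> dbar T n x y + dbar T n y z"
proof -
  have "(\<Sum>i<n. dist ((T ^^ i) x) ((T ^^ i) z)) \<le> (\<Sum>i<n. dist ((T ^^ i) x) ((T ^^ i) y) + dist ((T ^^ i) y) ((T ^^ i) z))"
    by (rule sum_mono) (rule dist_triangle)
  then show ?thesis unfolding dbar_def sum.distrib add_divide_distrib[symmetric]
    by (simp add: divide_right_mono)
qed

lemma sum_split: "(\<Sum>i<a+b. f i) = (\<Sum>i<a. f i) + (\<Sum>i<b. f (i + a)) " for f :: "nat \<Rightarrow> real"
  by (induction b) (auto simp: add.commute add.left_commute)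


definition LS where "LS T x y = limsup (\<lambda>n. ereal (dbar T n x y))"

lemma LS_bounds:
  assumes "T ` X \<subseteq> X" "x \<in> X" "y \<in> X" "\<forall>x\<in>X. \<forall>y\<in>X. dist x y \<le> B" "B \<ge> 0"
  shows "0 \<le> LS T x y" "LS T x y \<le> ereal B"
proof -
  have "0 \<le> liminf (\<lambda>n. ereal (dbar T n x y))"
    by (rule Liminf_bounded) (simp add: dbar_nonneg)
  also have "\<dots> \<le> LS T x y" unfolding LS_def by (rule Liminf_le_Limsup) simp
  finally show "0 \<le> LS T x y" .
  show "LS T x y \<le> ereal B" unfolding LS_def
    by (rule Limsup_bounded) (use dbar_le[OF assms] in simp)
qed

lemma LS_tri: "LS T x z \<le> LS T x y + LS T y z"
proof -
  have "LS T x z \<le> limsup (\<lambda>n. ereal (dbar T n x y) + ereal (dbar T n y z))"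
    unfolding LS_def by (rule Limsup_mono) (simp add: dbar_tri)
  also have "\<dots> \<le> LS T x y + LS T y z" unfolding LS_def by (rule ereal_limsup_add_mono)
  finally show ?thesis .
qed

lemma limsup_le_perturb:
  fixes u v :: "nat \<Rightarrow> real"
  assumes "\<And>n. n \<ge> 1 \<Longrightarrow> u n \<le> v n + c / real n"
  shows "limsup (\<lambda>n. ereal (u n)) \<le> limsup (\<lambda>n. ereal (v n))"
proof -
  have "limsup (\<lambda>n. ereal (u n)) \<le> limsup (\<lambda>n. ereal (v n) + ereal (c / real n))"
    by (rule Limsup_mono) (use assms in \<open>auto simp: eventually_sequentially\<close>)
  also have "\<dots> \<le> limsup (\<lambda>n. ereal (v n)) + limsup (\<lambda>n. ereal (c / real n))"
    by (rule ereal_limsup_add_mono)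
  also have "limsup (\<lambda>n. ereal (c / real n)) = 0"
  proof -
    have "(\<lambda>n. c / real n) \<longlonglongrightarrow> 0" by (rule lim_const_over_n)
    then have "(\<lambda>n. ereal (c / real n)) \<longlonglongrightarrow> ereal 0" by (rule tendsto_ereal)
    then have "limsup (\<lambda>n. ereal (c / real n)) = ereal 0" by (rule lim_imp_Limsup[rotated]) simp
    then show ?thesis by (simp add: zero_ereal_def)
  qed
  finally show ?thesis by simp
qed

lemma ineq_aux:
  fixes A d B n :: real
  assumes "n \<ge> 1" "0 \<le> A" "A \<le> n * B" "0 \<le> d" "d \<le> B"
  shows "A / n \<le> (d + A) / (n + 1) + B / n" "(d + A) / (n + 1) \<le> A / n + B / n"
proof -
  have B0: "B \<ge> 0" using assms by linarith
  have "A / n - (d + A) / (n + 1) = (A - n * d) / (n * (n+1))" using assms by (simp add: field_simps)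
  also have "\<dots> \<le> (n * B) / (n * (n+1))" apply (rule divide_right_mono) using assms mult_nonneg_nonneg[of n d] by linarith (use assms in simp)
  also have "\<dots> = B / (n+1)" using assms by simp
  also have "\<dots> \<le> B / n" using assms B0 by (simp add: frac_le)
  finally show "A / n \<le> (d + A) / (n + 1) + B / n" by simp
  have "(d + A) / (n + 1) - A / n = (n * d - A) / (n * (n+1))" using assms by (simp add: field_simps)
  also have "\<dots> \<le> (n * B) / (n * (n+1))" apply (rule divide_right_mono) using assms mult_left_mono[of d B n] by linarith (use assms in simp)
  also have "\<dots> = B / (n+1)" using assms by simp
  also have "\<dots> \<le> B / n" using assms B0 by (simp add: frac_le)
  finally show "(d + A) / (n + 1) \<le> A / n + B / n" by simp
qed

lemma LS_shift:
  assumes "T ` X \<subseteq> X" "x \<in> X" "y \<in> X" "\<forall>x\<in>X. \<forall>y\<in>X. dist x y \<le> B" "B \<ge> 0"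
  shows "LS T (T x) (T y) = LS T x y"
proof -
  define A where "A n = (\<Sum>i<n. dist ((T ^^ i) (T x)) ((T ^^ i) (T y)))" for n
  have e1: "dbar T n (T x) (T y) = A n / real n" for n unfolding A_def dbar_def by simp
  have e2: "dbar T (n + 1) x y = (dist x y + A n) / (real n + 1)" for n
  proof -
    have "(\<Sum>i<Suc n. dist ((T ^^ i) x) ((T ^^ i) y)) = dist x y + (\<Sum>i<n. dist ((T ^^ Suc i) x) ((T ^^ Suc i) y))"
      by (subst sum.lessThan_Suc_shift) simp
    also have "(\<Sum>i<n. dist ((T ^^ Suc i) x) ((T ^^ Suc i) y)) = A n"
      unfolding A_def funpow_Suc_right o_def by simp
    finally show ?thesis unfolding dbar_def by simp
  qed
  have Tx: "T x \<in> X" "T y \<in> X" using assms by auto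
  have Ab: "0 \<le> A n" "A n \<le> real n * B" for n
    using dbar_nonneg[of T n "T x" "T y"] dbar_le[OF assms(1) Tx assms(4,5), of n] e1[of n]
    by (cases "n = 0"; auto simp: A_def field_simps)+
  have d: "0 \<le> dist x y" "dist x y \<le> B" using assms by auto
  have "LS T (T x) (T y) \<le> limsup (\<lambda>n. ereal (dbar T (n+1) x y))"
    unfolding LS_def
    by (rule limsup_le_perturb[where c=B]) (use ineq_aux(1)[OF _ Ab d] in \<open>simp add: e1 e2[unfolded Suc_eq_plus1[symmetric]]\<close>)
  moreover have "limsup (\<lambda>n. ereal (dbar T (n+1) x y)) \<le> LS T (T x) (T y)"
    unfolding LS_def
    by (rule limsup_le_perturb[where c=B]) (use ineq_aux(2)[OF _ Ab d] in \<open>simp add: e1 e2[unfolded Suc_eq_plus1[symmetric]]\<close>)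
  moreover have "limsup (\<lambda>n. ereal (dbar T (n+1) x y)) = LS T x y"
    unfolding LS_def by (rule limsup_shift)
  ultimately show ?thesis by simp
qed


definition DD where "DD T x y = real_of_ereal (LS T x y)"

lemma LS_eq:
  assumes "T ` X \<subseteq> X" "x \<in> X" "y \<in> X" "\<forall>x\<in>X. \<forall>y\<in>X. dist x y \<le> B" "B \<ge> 0"
  shows "LS T x y = ereal (DD T x y)"
  using LS_bounds[OF assms] unfolding DD_def by (cases "LS T x y") auto

lemma DD_nonneg:
  assumes "T ` X \<subseteq> X" "x \<in> X" "y \<in> X" "\<forall>x\<in>X. \<forall>y\<in>X. dist x y \<le> B" "B \<ge> 0"
  shows "0 \<le> DD T x y"
  using LS_bounds[OF assms] LS_eq[OF assms] by simp

lemma DD_tri: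
  assumes "T ` X \<subseteq> X" "x \<in> X" "y \<in> X" "z \<in> X" "\<forall>x\<in>X. \<forall>y\<in>X. dist x y \<le> B" "B \<ge> 0"
  shows "DD T x z \<le> DD T x y + DD T y z"
  using LS_tri[of T x z y] LS_eq[OF assms(1,2,3,5,6)] LS_eq[OF assms(1,2,4,5,6)] LS_eq[OF assms(1,3,4,5,6)]
  by simp

lemma DD_iter:
  assumes "T ` X \<subseteq> X" "\<forall>x\<in>X. \<forall>y\<in>X. dist x y \<le> B" "B \<ge> 0"
  shows "x \<in> X \<Longrightarrow> y \<in> X \<Longrightarrow> DD T ((T ^^ k) x) ((T ^^ k) y) = DD T x y"
proof (induction k arbitrary: x y)
  case 0 then show ?case by simp
next
  case (Suc k)
  have "T x \<in> X" "T y \<in> X" using Suc.prems assms by auto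
  then have "DD T ((T ^^ k) (T x)) ((T ^^ k) (T y)) = DD T (T x) (T y)" by (rule Suc.IH)
  also have "\<dots> = DD T x y" unfolding DD_def using LS_shift[OF assms(1) Suc.prems assms(2,3)] by simp
  finally show ?case by (simp add: funpow_Suc_right del: funpow.simps)
qed

lemma unif:
  fixes D :: "'a::metric_space \<Rightarrow> 'a \<Rightarrow> real"
  assumes TX: "T ` X \<subseteq> X" and Bd: "\<forall>x\<in>X. \<forall>y\<in>X. dist x y \<le> B" "B \<ge> 0"
    and inv: "\<And>x y k. x \<in> X \<Longrightarrow> y \<in> X \<Longrightarrow> D ((T ^^ k) x) ((T ^^ k) y) = D x y"
    and pos: "\<And>x y. x \<in> X \<Longrightarrow> y \<in> X \<Longrightarrow> 0 \<le> D x y" and "\<eta> \<ge> 0"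
    and cov: "\<And>x y. x \<in> X \<Longrightarrow> y \<in> X \<Longrightarrow> \<exists>N. 1 \<le> N \<and> N \<le> M \<and> dbar T N x y < D x y + \<eta>"
  shows "x \<in> X \<Longrightarrow> y \<in> X \<Longrightarrow> (\<Sum>i<n. dist ((T ^^ i) x) ((T ^^ i) y)) \<le> real n * (D x y + \<eta>) + real M * B"
proof (induction n arbitrary: x y rule: less_induct)
  case (less n)
  show ?case
  proof (cases "n \<le> M")
    case True
    have "(\<Sum>i<n. dist ((T ^^ i) x) ((T ^^ i) y)) \<le> (\<Sum>i<n. B)"
      by (rule sum_mono) (use Bd less.prems iter_in[of T X] TX in simp)
    also have "\<dots> \<le> real M * B" using True Bd by (simp add: mult_right_mono)
    also have "\<dots> \<le> real n * (D x y + \<eta>) + real M * B"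
      using pos[OF less.prems] \<open>\<eta> \<ge> 0\<close> by simp
    finally show ?thesis .
  next
    case False
    obtain N where N: "1 \<le> N" "N \<le> M" "dbar T N x y < D x y + \<eta>" using cov[OF less.prems] by blast
    define x1 where "x1 = (T ^^ N) x"
    define y1 where "y1 = (T ^^ N) y"
    have x1: "x1 \<in> X" "y1 \<in> X" unfolding x1_def y1_def using iter_in[OF TX] less.prems by auto
    have nN: "n = N + (n - N)" using False N by simp
    have "(\<Sum>i<n. dist ((T ^^ i) x) ((T ^^ i) y)) =
          (\<Sum>i<N. dist ((T ^^ i) x) ((T ^^ i) y)) + (\<Sum>i<n - N. dist ((T ^^ (i + N)) x) ((T ^^ (i + N)) y))"
      by (subst nN, subst sum_split) simp
    also have "(\<Sum>i<n - N. dist ((T ^^ (i + N)) x) ((T ^^ (i + N)) y)) = (\<Sum>i<n - N. dist ((T ^^ i) x1) ((T ^^ i) y1))"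
      unfolding x1_def y1_def funpow_add o_def by simp
    also have "\<dots> \<le> real (n - N) * (D x1 y1 + \<eta>) + real M * B"
      by (rule less.IH) (use N False x1 in auto)
    also have "D x1 y1 = D x y" unfolding x1_def y1_def by (rule inv[OF less.prems])
    also have "(\<Sum>i<N. dist ((T ^^ i) x) ((T ^^ i) y)) = real N * dbar T N x y"
      unfolding dbar_def using N by simp
    also have "\<dots> \<le> real N * (D x y + \<eta>)" using N by (intro mult_left_mono) auto
    finally have "(\<Sum>i<n. dist ((T ^^ i) x) ((T ^^ i) y)) \<le> (real N + real (n - N)) * (D x y + \<eta>) + real M * B"
      by (simp add: algebra_simps)
    also have "real N + real (n - N) = real n" using False N by simp
    finally show ?thesis .
  qed
qed


lemma cover:
  assumes tds: "tds X T" and me: "mean_equicontinuous X T"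
    and Bd: "\<forall>x\<in>X. \<forall>y\<in>X. dist x y \<le> B" "B \<ge> 0" and eta: "\<eta> > 0"
  shows "\<exists>M. \<forall>x\<in>X. \<forall>y\<in>X. \<exists>N. 1 \<le> N \<and> N \<le> M \<and> dbar T N x y < DD T x y + \<eta>"
proof -
  have TX: "T ` X \<subseteq> X" using tds unfolding tds_def by simp
  obtain \<delta> where \<delta>: "\<delta> > 0" "\<forall>x\<in>X. \<forall>y\<in>X. dist x y < \<delta> \<longrightarrow> LS T x y < ereal (\<eta>/5)"
  proof -
    have "\<eta>/5 > 0" using eta by simp
    then show ?thesis using me that unfolding mean_equicontinuous_def LS_def by blast
  qed
  have dsmall: "DD T x y < \<eta>/5" if "x \<in> X" "y \<in> X" "dist x y < \<delta>" for x y
  proof -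
    have "LS T x y < ereal (\<eta>/5)" using \<delta>(2) that by blast
    then show ?thesis using LS_eq[OF TX that(1,2) Bd] by simp
  qed
  have "\<forall>p\<in>X \<times> X. \<exists>N. 1 \<le> N \<and> dbar T N (fst p) (snd p) < DD T (fst p) (snd p) + \<eta>/5"
  proof
    fix p assume p: "p \<in> X \<times> X"
    have "LS T (fst p) (snd p) < ereal (DD T (fst p) (snd p) + \<eta>/5)"
      using LS_eq[OF TX _ _ Bd, of "fst p" "snd p"] p eta by auto
    then have "eventually (\<lambda>n. ereal (dbar T n (fst p) (snd p)) < ereal (DD T (fst p) (snd p) + \<eta>/5)) sequentially"
      unfolding LS_def by (rule Limsup_lessD)
    then obtain N0 where "\<forall>n\<ge>N0. dbar T n (fst p) (snd p) < DD T (fst p) (snd p) + \<eta>/5"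
      unfolding eventually_sequentially by auto
    then show "\<exists>N. 1 \<le> N \<and> dbar T N (fst p) (snd p) < DD T (fst p) (snd p) + \<eta>/5"
      by (intro exI[of _ "max N0 1"]) auto
  qed
  note NfEx = this
  obtain Nf where Nf: "\<forall>p\<in>X \<times> X. 1 \<le> Nf p \<and> dbar T (Nf p) (fst p) (snd p) < DD T (fst p) (snd p) + \<eta>/5"
    using bchoice[OF NfEx] by (elim exE) blast
  have "\<forall>p\<in>X \<times> X. \<exists>r>0. \<forall>x'\<in>X. \<forall>y'\<in>X. dist (fst p) x' < r \<longrightarrow> dist (snd p) y' < r \<longrightarrow>
            dbar T (Nf p) x' y' < DD T x' y' + \<eta>"
  proof
    fix p assume p: "p \<in> X \<times> X"
    define x where "x = fst p"
    define y where "y = snd p"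
    have xy: "x \<in> X" "y \<in> X" using p unfolding x_def y_def by auto
    define N where "N = Nf p"
    have N: "1 \<le> N" "dbar T N x y < DD T x y + \<eta>/5" using Nf p unfolding N_def x_def y_def by auto
    obtain \<rho> where \<rho>: "\<rho> > 0" "\<forall>x\<in>X. \<forall>y\<in>X. dist x y < \<rho> \<longrightarrow> (\<forall>i<N. dist ((T ^^ i) x) ((T ^^ i) y) < \<eta>/5)"
      using UC[OF tds, of "\<eta>/5" N] eta by auto
    have db: "dbar T N a b < \<eta>/5" if "a \<in> X" "b \<in> X" "dist a b < \<rho>" for a b
      unfolding dbar_def by (rule avg_lt) (use N \<rho> that in auto)
    show "\<exists>r>0. \<forall>x'\<in>X. \<forall>y'\<in>X. dist (fst p) x' < r \<longrightarrow> dist (snd p) y' < r \<longrightarrow>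
            dbar T (Nf p) x' y' < DD T x' y' + \<eta>"
    proof (intro exI[of _ "min \<delta> \<rho>"] conjI ballI impI)
      show "0 < min \<delta> \<rho>" using \<delta> \<rho> by simp
      fix x' y' assume x'y': "x' \<in> X" "y' \<in> X" "dist (fst p) x' < min \<delta> \<rho>" "dist (snd p) y' < min \<delta> \<rho>"
      then have d1: "dist x x' < \<delta>" "dist x x' < \<rho>" "dist y y' < \<delta>" "dist y y' < \<rho>"
        unfolding x_def y_def by auto
      have "dbar T N x' y' \<le> dbar T N x' x + dbar T N x y'" by (rule dbar_tri)
      also have "dbar T N x y' \<le> dbar T N x y + dbar T N y y'" by (rule dbar_tri)
      finally have "dbar T N x' y' \<le> dbar T N x' x + dbar T N x y + dbar T N y y'" by simp
      moreover have "dbar T N x' x < \<eta>/5" using db[of x' x] d1 x'y' xy by (simp add: dist_commute)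
      moreover have "dbar T N y y' < \<eta>/5" using db[of y y'] d1 x'y' xy by simp
      moreover have "DD T x y \<le> DD T x x' + DD T x' y" by (rule DD_tri[OF TX xy(1) x'y'(1) xy(2) Bd])
      moreover have "DD T x' y \<le> DD T x' y' + DD T y' y" by (rule DD_tri[OF TX x'y'(1) x'y'(2) xy(2) Bd])
      moreover have "DD T x x' < \<eta>/5" using dsmall[of x x'] d1 xy x'y' by simp
      moreover have "DD T y' y < \<eta>/5" using dsmall[of y' y] d1 xy x'y' by (simp add: dist_commute)
      ultimately show "dbar T (Nf p) x' y' < DD T x' y' + \<eta>" using N unfolding N_def by linarith
    qed
  qed
  note rfEx = this
  obtain rf where rf: "\<forall>p\<in>X \<times> X. rf p > 0 \<and> (\<forall>x'\<in>X. \<forall>y'\<in>X. dist (fst p) x' < rf p \<longrightarrow> dist (snd p) y' < rf p \<longrightarrow>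
            dbar T (Nf p) x' y' < DD T x' y' + \<eta>)"
    using bchoice[OF rfEx] by (elim exE) blast
  have cpt: "compact (X \<times> X)" using tds unfolding tds_def by (simp add: compact_Times)
  obtain K where K: "K \<subseteq> X \<times> X" "finite K" "X \<times> X \<subseteq> (\<Union>p\<in>K. ball (fst p) (rf p) \<times> ball (snd p) (rf p))"
  proof (rule compactE_image[OF cpt, of "X \<times> X" "\<lambda>p. ball (fst p) (rf p) \<times> ball (snd p) (rf p)"])
    show "open (ball (fst p) (rf p) \<times> ball (snd p) (rf p))" for p by (simp add: open_Times)
    show "X \<times> X \<subseteq> (\<Union>p\<in>X \<times> X. ball (fst p) (rf p) \<times> ball (snd p) (rf p))"
    proof
      fix q assume q: "q \<in> X \<times> X"
      then have "q \<in> ball (fst q) (rf q) \<times> ball (snd q) (rf q)" using rf by (cases q) auto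
      then show "q \<in> (\<Union>p\<in>X \<times> X. ball (fst p) (rf p) \<times> ball (snd p) (rf p))" using q by blast
    qed
  qed blast
  define M where "M = Max (insert 1 (Nf ` K))"
  show ?thesis
  proof (rule exI[of _ M], intro ballI)
    fix x y assume xy: "x \<in> X" "y \<in> X"
    then obtain p where p: "p \<in> K" "(x, y) \<in> ball (fst p) (rf p) \<times> ball (snd p) (rf p)" using K(3) by blast
    have pX: "p \<in> X \<times> X" using p K by auto
    have "Nf p \<le> M" unfolding M_def using K(2) p(1) by (intro Max_ge) auto
    moreover have "1 \<le> Nf p" using Nf pX by auto
    moreover have "dbar T (Nf p) x y < DD T x y + \<eta>" using rf pX p(2) xy by auto
    ultimately show "\<exists>N\<ge>1. N \<le> M \<and> dbar T N x y < DD T x y + \<eta>" by blast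
  qed
qed


theorem mainTheorem4:
  fixes X :: "'a::metric_space set" and T :: "'a \<Rightarrow> 'a"
  assumes "minimal_tds X T"
  shows "mean_equicontinuous X T \<longleftrightarrow> equicontinuous_in_mean X T"
proof -
  have tds: "tds X T" using assms unfolding minimal_tds_def by simp
  have TX: "T ` X \<subseteq> X" using tds unfolding tds_def by simp
  have "bounded X" using tds unfolding tds_def by (simp add: compact_imp_bounded)
  then obtain e where e: "\<forall>x\<in>X. \<forall>y\<in>X. dist x y \<le> e" unfolding bounded_two_points by blast
  define B where "B = max e 0"
  have Bd: "\<forall>x\<in>X. \<forall>y\<in>X. dist x y \<le> B" "B \<ge> 0" using e unfolding B_def by force+
  show ?thesis
  proof
    assume me: "mean_equicontinuous X T"
    show "equicontinuous_in_mean X T"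
      unfolding equicontinuous_in_mean_def
    proof (intro allI impI)
      fix \<epsilon> :: real assume \<epsilon>: "\<epsilon> > 0"
      define \<eta> where "\<eta> = \<epsilon>/3"
      have \<eta>: "\<eta> > 0" using \<epsilon> unfolding \<eta>_def by simp
      obtain \<delta>0 where \<delta>0: "\<delta>0 > 0" "\<forall>x\<in>X. \<forall>y\<in>X. dist x y < \<delta>0 \<longrightarrow> LS T x y < ereal \<eta>"
        using me \<eta> unfolding mean_equicontinuous_def LS_def by blast
      have dsmall: "DD T x y < \<eta>" if "x \<in> X" "y \<in> X" "dist x y < \<delta>0" for x y
      proof -
        have "LS T x y < ereal \<eta>" using \<delta>0(2) that by blast
        then show ?thesis using LS_eq[OF TX that(1,2) Bd] by simp
      qed
      obtain M where M: "\<forall>x\<in>X. \<forall>y\<in>X. \<exists>N. 1 \<le> N \<and> N \<le> M \<and> dbar T N x y < DD T x y + \<eta>"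
        using cover[OF tds me Bd \<eta>] by blast
      have sb: "(\<Sum>i<n. dist ((T ^^ i) x) ((T ^^ i) y)) \<le> real n * (DD T x y + \<eta>) + real M * B"
        if "x \<in> X" "y \<in> X" for x y n
        by (rule unif[where D="DD T", OF TX Bd _ _ _ _ that])
           (use DD_iter[OF TX Bd] DD_nonneg[OF TX _ _ Bd] \<eta> M in auto)
      define N0 where "N0 = nat \<lceil>3 * real M * B / \<epsilon>\<rceil> + 1"
      have N0: "real N0 > 3 * real M * B / \<epsilon>" unfolding N0_def by linarith
      obtain \<delta>1 where \<delta>1: "\<delta>1 > 0" "\<forall>x\<in>X. \<forall>y\<in>X. dist x y < \<delta>1 \<longrightarrow> (\<forall>i<N0. dist ((T ^^ i) x) ((T ^^ i) y) < \<epsilon>)"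
        using UC[OF tds \<epsilon>, of N0] by blast
      show "\<exists>\<delta>>0. \<forall>x\<in>X. \<forall>y\<in>X. dist x y < \<delta> \<longrightarrow> (\<forall>n\<ge>1. dbar T n x y < \<epsilon>)"
      proof (rule exI[of _ "min \<delta>0 \<delta>1"], intro conjI ballI impI allI)
        show "0 < min \<delta>0 \<delta>1" using \<delta>0 \<delta>1 by simp
        fix x y n assume xy: "x \<in> X" "y \<in> X" "dist x y < min \<delta>0 \<delta>1" and n: "(1::nat) \<le> n"
        show "dbar T n x y < \<epsilon>"
        proof (cases "n < N0")
          case True
          show ?thesis unfolding dbar_def
            by (rule avg_lt) (use n True \<delta>1 xy in auto)
        next
          case False
          have npos: "real n > 0" using n by simp
          have "dbar T n x y \<le> (real n * (DD T x y + \<eta>) + real M * B) / real n"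
            unfolding dbar_def using sb[OF xy(1,2), of n] npos by (simp add: divide_right_mono)
          also have "\<dots> = DD T x y + \<eta> + real M * B / real n" using npos by (simp add: field_simps)
          also have "real M * B / real n < \<eta>"
          proof -
            have "3 * real M * B / \<epsilon> < real n" using N0 False by linarith
            then have "3 * real M * B < real n * \<epsilon>" using \<epsilon> by (simp add: divide_less_eq)
            then show ?thesis unfolding \<eta>_def using npos by (simp add: divide_less_eq field_simps)
          qed
          finally show ?thesis using dsmall[OF xy(1,2)] xy(3) unfolding \<eta>_def by simp
        qed
      qed
    qed
  next
    assume em: "equicontinuous_in_mean X T"
    show "mean_equicontinuous X T"
      unfolding mean_equicontinuous_def
    proof (intro allI impI)
      fix \<epsilon> :: real assume \<epsilon>: "\<epsilon> > 0"
      then obtain \<delta> where \<delta>: "\<delta> > 0" "\<forall>x\<in>X. \<forall>y\<in>X. dist x y < \<delta> \<longrightarrow> (\<forall>n\<ge>1. dbar T n x y < \<epsilon>/2)"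
        using em unfolding equicontinuous_in_mean_def by (meson half_gt_zero)
      show "\<exists>\<delta>>0. \<forall>x\<in>X. \<forall>y\<in>X. dist x y < \<delta> \<longrightarrow> limsup (\<lambda>n. ereal (dbar T n x y)) < ereal \<epsilon>"
      proof (rule exI[of _ \<delta>], intro conjI ballI impI)
        show "\<delta> > 0" by fact
        fix x y assume xy: "x \<in> X" "y \<in> X" "dist x y < \<delta>"
        have "limsup (\<lambda>n. ereal (dbar T n x y)) \<le> ereal (\<epsilon>/2)"
          by (rule Limsup_bounded) (use \<delta> xy in \<open>auto simp: eventually_sequentially intro!: exI[of _ 1] less_imp_le\<close>)
        also have "\<dots> < ereal \<epsilon>" using \<epsilon> by simp
        finally show "limsup (\<lambda>n. ereal (dbar T n x y)) < ereal \<epsilon>" .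
      qed
    qed
  qed
qed

end
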